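(* Let $\mathcal{X}\subseteq\mathbb{R}^d$, $\mathcal{Y}=\{-1,+1\}$, let $p(\bm{x},y)$ be a joint distribution on $\mathcal{X}\times\mathcal{Y}$ with $\pi_+=p(y=+1)\in(0,1)$, $\pi_-=1-\pi_+$, $\pi_+\neq1/2$, and $p_\pm(\bm{x})=p(\bm{x}\mid y=\pm1)$. Let $\ell:\mathbb{R}\times\mathcal{Y}\to[0,\infty)$ be a loss, $\ell_\pm(z):=\ell(z,\pm1)$, and $R(g)=\mathbb{E}_{p(\bm{x},y)}[\ell(g(\bm{x}),y)]$. Define the densities $\widetilde{p}_+(\bm{x})=\frac{\pi_+}{\pi_-^2+\pi_+}p_+(\bm{x})+\frac{\pi_-^2}{\pi_-^2+\pi_+}p_-(\bm{x})$, $\widetilde{p}_-(\bm{x})=\frac{\pi_+^2}{\pi_+^2+\pi_-}p_+(\bm{x})+\frac{\pi_-}{\pi_+^2+\pi_-}p_-(\bm{x})$, and for $t\in\{+,-\}$ (with $-t$ the opposite sign) the row vectors $\bm{\alpha}^{\mathrm S}_t=\frac{\pi_t^2}{\pi_+-\pi_-}(\pi_+,\,-\pi_-)$, $\bm{\alpha}^{\mathrm D}_t=\frac{1}{\pi_+-\pi_-}\big(\pi_-(\pi_t^2-\pi_{-t}),\,\pi_+(\pi_{-t}-\pi_t^2)\big)$. Set $R_{\mathrm{S\text{-}PC}}(g)=\sum_{t\in\{+,-\}}\mathbb{E}_{\widetilde p_t(\bm x)}\big[\bm{\alpha}^{\mathrm S}_t(\ell_+(g(\bm{x})),\ell_-(g(\bm{x})))^\top\big]$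 and $R_{\mathrm{D\text{-}PC}}(g)=\sum_{t\in\{+,-\}}\mathbb{E}_{\widetilde p_t(\bm x)}\big[\bm{\alpha}^{\mathrm D}_t(\ell_+(g(\bm{x})),\ell_-(g(\bm{x})))^\top\big]$. Then for every $g:\mathcal{X}\to\mathbb{R}$ for which these expectations are finite, $$R(g)=R_{\mathrm{SD\text{-}PC}}(g):=R_{\mathrm{S\text{-}PC}}(g)+R_{\mathrm{D\text{-}PC}}(g).$$
   Context: $\widetilde p_+$ and $\widetilde p_-$ model the marginal distributions of the instance judged more likely, respectively less likely, to belong to the positive class in a pairwise comparison; $R_{\mathrm{S\text{-}PC}}$ and $R_{\mathrm{D\text{-}PC}}$ are the parts of the risk attributed to similar and dissimilar pairs that also carry a pairwise-comparison label. *)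

theory Defs
  imports "HOL-Analysis.Analysis"
begin

text \<open>Class signs t in {+,-} are encoded as booleans: True = +, False = -.
  Labels y in Y = {-1,+1} are encoded as the reals -1 and 1.\<close>

definition cls_prior :: "real \<Rightarrow> bool \<Rightarrow> real" where
  "cls_prior \<pi>p t = (if t then \<pi>p else 1 - \<pi>p)"

definition joint_dens :: "real \<Rightarrow> ('x \<Rightarrow> real) \<Rightarrow> ('x \<Rightarrow> real) \<Rightarrow> 'x \<Rightarrow> real \<Rightarrow> real" where
  "joint_dens \<pi>p pp pm x y =
     (if y = 1 then \<pi>p * pp x else if y = -1 then (1 - \<pi>p) * pm x else 0)"

definition dens_exp :: "(real^'d) set \<Rightarrow> (real^'d \<Rightarrow> real) \<Rightarrow> (real^'d \<Rightarrow> real) \<Rightarrow> real" where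
  "dens_exp X h f = (LINT x:X|lborel. h x * f x)"

definition risk :: "(real^'d) set \<Rightarrow> real \<Rightarrow> (real^'d \<Rightarrow> real) \<Rightarrow> (real^'d \<Rightarrow> real)
     \<Rightarrow> (real \<Rightarrow> real \<Rightarrow> real) \<Rightarrow> (real^'d \<Rightarrow> real) \<Rightarrow> real" where
  "risk X \<pi>p pp pm loss g =
     (LINT x:X|lborel. (\<Sum>y\<in>{-1, 1::real}. loss (g x) y * joint_dens \<pi>p pp pm x y))"

definition ptilde :: "real \<Rightarrow> ('x \<Rightarrow> real) \<Rightarrow> ('x \<Rightarrow> real) \<Rightarrow> bool \<Rightarrow> 'x \<Rightarrow> real" where
  "ptilde \<pi>p pp pm t x =
     (let \<pi>m = 1 - \<pi>p in
      if t then \<pi>p / (\<pi>m\<^sup>2 + \<pi>p) * pp x + \<pi>m\<^sup>2 / (\<pi>m\<^sup>2 + \<pi>p) * pm x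
      else \<pi>p\<^sup>2 / (\<pi>p\<^sup>2 + \<pi>m) * pp x + \<pi>m / (\<pi>p\<^sup>2 + \<pi>m) * pm x)"

definition alphaS :: "real \<Rightarrow> bool \<Rightarrow> real \<times> real" where
  "alphaS \<pi>p t =
     (let \<pi>m = 1 - \<pi>p; c = (cls_prior \<pi>p t)\<^sup>2 / (\<pi>p - \<pi>m) in (c * \<pi>p, c * (- \<pi>m)))"

definition alphaD :: "real \<Rightarrow> bool \<Rightarrow> real \<times> real" where
  "alphaD \<pi>p t =
     (let \<pi>m = 1 - \<pi>p; \<pi>t = cls_prior \<pi>p t; \<pi>nt = cls_prior \<pi>p (\<not> t) in
      (1 / (\<pi>p - \<pi>m) * (\<pi>m * (\<pi>t\<^sup>2 - \<pi>nt)), 1 / (\<pi>p - \<pi>m) * (\<pi>p * (\<pi>nt - \<pi>t\<^sup>2))))"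

definition rowdot :: "real \<times> real \<Rightarrow> (real \<Rightarrow> real \<Rightarrow> real) \<Rightarrow> real \<Rightarrow> real" where
  "rowdot a loss z = fst a * loss z 1 + snd a * loss z (-1)"

definition risk_SPC :: "(real^'d) set \<Rightarrow> real \<Rightarrow> (real^'d \<Rightarrow> real) \<Rightarrow> (real^'d \<Rightarrow> real)
     \<Rightarrow> (real \<Rightarrow> real \<Rightarrow> real) \<Rightarrow> (real^'d \<Rightarrow> real) \<Rightarrow> real" where
  "risk_SPC X \<pi>p pp pm loss g =
     (\<Sum>t\<in>UNIV. dens_exp X (ptilde \<pi>p pp pm t) (\<lambda>x. rowdot (alphaS \<pi>p t) loss (g x)))"

definition risk_DPC :: "(real^'d) set \<Rightarrow> real \<Rightarrow> (real^'d \<Rightarrow> real) \<Rightarrow> (real^'d \<Rightarrow> real)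
     \<Rightarrow> (real \<Rightarrow> real \<Rightarrow> real) \<Rightarrow> (real^'d \<Rightarrow> real) \<Rightarrow> real" where
  "risk_DPC X \<pi>p pp pm loss g =
     (\<Sum>t\<in>UNIV. dens_exp X (ptilde \<pi>p pp pm t) (\<lambda>x. rowdot (alphaD \<pi>p t) loss (g x)))"

definition risk_SDPC where
  "risk_SDPC X \<pi>p pp pm loss g = risk_SPC X \<pi>p pp pm loss g + risk_DPC X \<pi>p pp pm loss g"

end

theory Submission
  imports Defs
begin

lemma pw0:
  fixes p m P M A B :: real
  assumes hm: "m = 1 - p" and d1: "m\<^sup>2 + p \<noteq> 0" and d2: "p\<^sup>2 + m \<noteq> 0" and d3: "p - m \<noteq> 0"
  shows "A * (p * P) + B * (m * M) =
    (p / (m\<^sup>2 + p) * P + m\<^sup>2 / (m\<^sup>2 + p) * M) * ((p\<^sup>2 / (p - m) * p) * A + (p\<^sup>2 / (p - m) * - m) * B)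
  + (p\<^sup>2 / (p\<^sup>2 + m) * P + m / (p\<^sup>2 + m) * M) * ((m\<^sup>2 / (p - m) * p) * A + (m\<^sup>2 / (p - m) * - m) * B)
  + ((p / (m\<^sup>2 + p) * P + m\<^sup>2 / (m\<^sup>2 + p) * M) * ((1 / (p - m) * (m * (p\<^sup>2 - m))) * A + (1 / (p - m) * (p * (m - p\<^sup>2))) * B)
  + (p\<^sup>2 / (p\<^sup>2 + m) * P + m / (p\<^sup>2 + m) * M) * ((1 / (p - m) * (m * (m\<^sup>2 - p))) * A + (1 / (p - m) * (p * (p - m\<^sup>2))) * B))"
  (is "_ = ?X1 * (?a1 * A + ?b1 * B) + ?X2 * (?a2 * A + ?b2 * B) + (?X1 * (?c1 * A + ?e1 * B) + ?X2 * (?c2 * A + ?e2 * B))")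
proof -
  have e: "p = 1 - m" using hm by simp
  have r: "?X1 * (?a1 * A + ?b1 * B) + ?X2 * (?a2 * A + ?b2 * B) + (?X1 * (?c1 * A + ?e1 * B) + ?X2 * (?c2 * A + ?e2 * B))
    = ?X1 * ((?a1 + ?c1) * A + (?b1 + ?e1) * B) + ?X2 * ((?a2 + ?c2) * A + (?b2 + ?e2) * B)"
    by (simp only: algebra_simps)
  have k1: "?a1 + ?c1 = 1"
  proof -
    have X: "?a1 + ?c1 = (p^3 + m*p^2 - m^2) / (p - m)" using d3 by (simp add: divide_simps) (simp add: algebra_simps power2_eq_square power3_eq_cube)
    have Y: "p^3 + m*p^2 - m^2 = 1 * (p - m)" unfolding e by (simp add: algebra_simps power2_eq_square power3_eq_cube)
    show ?thesis unfolding X Y using d3 by (simp add: divide_simps algebra_simps)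
  qed
  have k2: "?b1 + ?e1 = - p"
  proof -
    have X: "?b1 + ?e1 = p * (m - p*m - p^2) / (p - m)" using d3 by (simp add: divide_simps) (simp add: algebra_simps power2_eq_square power3_eq_cube)
    have Y: "m - p*m - p^2 = (- 1) * (p - m)" unfolding e by (simp add: algebra_simps power2_eq_square)
    show ?thesis unfolding X Y using d3 by (simp add: divide_simps algebra_simps)
  qed
  have k3: "?a2 + ?c2 = - m"
  proof -
    have X: "?a2 + ?c2 = m * (m*p + m^2 - p) / (p - m)" using d3 by (simp add: divide_simps) (simp add: algebra_simps power2_eq_square power3_eq_cube)
    have Y: "m*p + m^2 - p = (- 1) * (p - m)" unfolding e by (simp add: algebra_simps power2_eq_square)
    show ?thesis unfolding X Y using d3 by (simp add: divide_simps algebra_simps)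
  qed
  have k4: "?b2 + ?e2 = 1"
  proof -
    have X: "?b2 + ?e2 = (p^2 - m^3 - p*m^2) / (p - m)" using d3 by (simp add: divide_simps) (simp add: algebra_simps power2_eq_square power3_eq_cube)
    have Y: "p^2 - m^3 - p*m^2 = 1 * (p - m)" unfolding e by (simp add: algebra_simps power2_eq_square power3_eq_cube)
    show ?thesis unfolding X Y using d3 by (simp add: divide_simps algebra_simps)
  qed
  have D1: "m\<^sup>2 + p = 1 - p * m" unfolding e by (simp add: algebra_simps power2_eq_square)
  have D2: "p\<^sup>2 + m = 1 - p * m" unfolding e by (simp add: algebra_simps power2_eq_square)
  have dd: "1 - p * m \<noteq> 0" using d1 D1 by simp
  have fin: "A * (p * P) + B * (m * M) = ((p * P + m\<^sup>2 * M) * (A - p * B) + (p\<^sup>2 * P + m * M) * (B - m * A)) / (1 - p * m)"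
  proof -
    have "(p * P + m\<^sup>2 * M) * (A - p * B) + (p\<^sup>2 * P + m * M) * (B - m * A) = (A * (p * P) + B * (m * M)) * (1 - p * m)"
      unfolding e by (simp add: algebra_simps power2_eq_square)
    then show ?thesis using dd by simp
  qed
  have x1: "?X1 = (p * P + m\<^sup>2 * M) / (1 - p * m)" unfolding D1 by (simp add: add_divide_distrib)
  have x2: "?X2 = (p\<^sup>2 * P + m * M) / (1 - p * m)" unfolding D2 by (simp add: add_divide_distrib)
  have g: "\<And>a b d::real. a / d * (1 * A + - p * B) + b / d * (- m * A + 1 * B) = (a * (A - p * B) + b * (B - m * A)) / d"
    by (simp add: add_divide_distrib diff_divide_distrib algebra_simps)
  show ?thesis
    apply (subst r)
    apply (unfold k1 k2 k3 k4)
    apply (unfold x1 x2 g)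
    apply (rule fin)
    done
qed


lemma pw:
  fixes p :: real and pp pm :: "'x \<Rightarrow> real" and loss :: "real \<Rightarrow> real \<Rightarrow> real"
  assumes "0 < p" "p < 1" "p \<noteq> 1/2"
  shows "(\<Sum>y\<in>{-1, 1::real}. loss z y * joint_dens p pp pm x y) =
    (\<Sum>t\<in>UNIV. ptilde p pp pm t x * rowdot (alphaS p t) loss z)
    + (\<Sum>t\<in>UNIV. ptilde p pp pm t x * rowdot (alphaD p t) loss z)"
proof -
  define m where "m = 1 - p"
  have d1: "m\<^sup>2 + p \<noteq> 0" using assms unfolding m_def by (smt (verit) zero_le_power2)
  have d2: "p\<^sup>2 + m \<noteq> 0" using assms unfolding m_def by (smt (verit) zero_le_power2)
  have d3: "p - m \<noteq> 0" using assms unfolding m_def by auto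
  have "(\<Sum>y\<in>{-1, 1::real}. loss z y * joint_dens p pp pm x y) = loss z 1 * (p * pp x) + loss z (-1) * (m * pm x)"
    by (simp add: joint_dens_def m_def)
  also have "\<dots> = (p / (m\<^sup>2 + p) * pp x + m\<^sup>2 / (m\<^sup>2 + p) * pm x) * ((p\<^sup>2 / (p - m) * p) * loss z 1 + (p\<^sup>2 / (p - m) * - m) * loss z (-1))
  + (p\<^sup>2 / (p\<^sup>2 + m) * pp x + m / (p\<^sup>2 + m) * pm x) * ((m\<^sup>2 / (p - m) * p) * loss z 1 + (m\<^sup>2 / (p - m) * - m) * loss z (-1))
  + ((p / (m\<^sup>2 + p) * pp x + m\<^sup>2 / (m\<^sup>2 + p) * pm x) * ((1 / (p - m) * (m * (p\<^sup>2 - m))) * loss z 1 + (1 / (p - m) * (p * (m - p\<^sup>2))) * loss z (-1))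
  + (p\<^sup>2 / (p\<^sup>2 + m) * pp x + m / (p\<^sup>2 + m) * pm x) * ((1 / (p - m) * (m * (m\<^sup>2 - p))) * loss z 1 + (1 / (p - m) * (p * (p - m\<^sup>2))) * loss z (-1)))"
    by (rule pw0[OF m_def d1 d2 d3])
  also have "\<dots> = (\<Sum>t\<in>UNIV. ptilde p pp pm t x * rowdot (alphaS p t) loss z)
    + (\<Sum>t\<in>UNIV. ptilde p pp pm t x * rowdot (alphaD p t) loss z)"
    unfolding UNIV_bool ptilde_def alphaS_def alphaD_def cls_prior_def rowdot_def Let_def m_def[symmetric]
    by simp
  finally show ?thesis .
qed

theorem theorem3p2:
  fixes X :: "(real^'d) set"
    and \<pi>p :: real
    and pp pm :: "real^'d \<Rightarrow> real"
    and loss :: "real \<Rightarrow> real \<Rightarrow> real"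
    and g :: "real^'d \<Rightarrow> real"
  assumes X_meas: "X \<in> sets lborel"
    and pi_pos: "0 < \<pi>p" and pi_lt1: "\<pi>p < 1" and pi_ne_half: "\<pi>p \<noteq> 1/2"
    and pp_meas: "pp \<in> borel_measurable lborel" and pm_meas: "pm \<in> borel_measurable lborel"
    and pp_nonneg: "\<And>x. x \<in> X \<Longrightarrow> 0 \<le> pp x" and pm_nonneg: "\<And>x. x \<in> X \<Longrightarrow> 0 \<le> pm x"
    and pp_int: "set_integrable lborel X pp" and pm_int: "set_integrable lborel X pm"
    and pp_norm: "(LINT x:X|lborel. pp x) = 1" and pm_norm: "(LINT x:X|lborel. pm x) = 1"
    and loss_nonneg: "\<And>z y. y \<in> {-1, 1} \<Longrightarrow> 0 \<le> loss z y"
    and finite_exp: "\<And>t y. y \<in> {-1, 1} \<Longrightarrow>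
          set_integrable lborel X (\<lambda>x. ptilde \<pi>p pp pm t x * loss (g x) y)"
  shows "risk X \<pi>p pp pm loss g = risk_SDPC X \<pi>p pp pm loss g"
proof -
  define h where "h t a x = ptilde \<pi>p pp pm t x * rowdot a loss (g x)" for t a x
  have hint: "set_integrable lborel X (h t a)" for t a
  proof -
    have e: "h t a = (\<lambda>x. fst a * (ptilde \<pi>p pp pm t x * loss (g x) 1) + snd a * (ptilde \<pi>p pp pm t x * loss (g x) (-1)))"
      unfolding h_def rowdot_def by (auto simp: algebra_simps)
    show ?thesis unfolding e
      by (intro set_integral_add(1) set_integrable_mult_right finite_exp) auto
  qed
  have "risk X \<pi>p pp pm loss g = (LINT x:X|lborel. (h False (alphaS \<pi>p False) x + h True (alphaS \<pi>p True) x)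
          + (h False (alphaD \<pi>p False) x + h True (alphaD \<pi>p True) x))"
    unfolding risk_def pw[OF pi_pos pi_lt1 pi_ne_half] h_def UNIV_bool by simp
  also have "\<dots> = ((LINT x:X|lborel. h False (alphaS \<pi>p False) x) + (LINT x:X|lborel. h True (alphaS \<pi>p True) x))
     + ((LINT x:X|lborel. h False (alphaD \<pi>p False) x) + (LINT x:X|lborel. h True (alphaD \<pi>p True) x))"
    using hint by (simp add: set_integral_add)
  also have "\<dots> = risk_SDPC X \<pi>p pp pm loss g"
    unfolding risk_SDPC_def risk_SPC_def risk_DPC_def dens_exp_def h_def UNIV_bool by simp
  finally show ?thesis .
qed

end
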